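(* Let $\alpha\in(0,1)$, $a,b\in\mathbb{R}$, $\tau>0$, and $Q(s)=s^\alpha-a-b e^{-s\tau}$ with the principal branch of $s^\alpha$ (and $0^\alpha=0$). If $a\le b<-a$, then $Q(s)=0$ has no root $s$ with $\operatorname{Re}s\ge 0$.
   Context: $s^\alpha=|s|^\alpha e^{i\alpha\arg s}$ with $\arg s\in(-\pi,\pi]$ restricted to $\operatorname{Re}s\ge0$, i.e. $\arg s\in[-\pi/2,\pi/2]$. *)

theory Defs
  imports "HOL-Analysis.Analysis"
begin

end

theory Submission
  imports Defs
begin

theorem lemma3p2:
  fixes \<alpha> a b \<tau> :: real
  assumes "0 < \<alpha>" and "\<alpha> < 1" and "0 < \<tau>"
    and "a \<le> b" and "b < - a"
  shows "\<not> (\<exists>s::complex. 0 \<le> Re s \<and>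
            s powr complex_of_real \<alpha> - complex_of_real a
              - complex_of_real b * exp (- s * complex_of_real \<tau>) = 0)"
proof
  assume "\<exists>s::complex. 0 \<le> Re s \<and>
            s powr complex_of_real \<alpha> - complex_of_real a
              - complex_of_real b * exp (- s * complex_of_real \<tau>) = 0"
  then obtain s :: complex where hs: "0 \<le> Re s"
    and eq: "s powr complex_of_real \<alpha> - complex_of_real a
              - complex_of_real b * exp (- s * complex_of_real \<tau>) = 0" by blast
  show False
  proof (cases "s = 0")
    case True
    with eq assms show False by simp
  next
    case False
    define w where "w = s powr complex_of_real \<alpha>"
    have w: "w = exp (complex_of_real \<alpha> * ln s)" using False by (simp add: w_def powr_def)
    have im: "\<bar>Im (Ln s)\<bar> \<le> pi/2" using Re_Ln_pos_le[OF False] hs by simp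
    have "\<bar>\<alpha> * Im (Ln s)\<bar> \<le> \<alpha> * (pi/2)"
      using im assms(1) by (simp add: abs_mult mult_left_mono)
    also have "\<dots> < pi/2" using assms(2) pi_gt_zero by simp
    finally have "0 < cos (\<alpha> * Im (Ln s))"
      by (intro cos_gt_zero_pi) auto
    hence Rew: "0 < Re w" unfolding w by (simp add: Re_exp)
    have "w - complex_of_real a = complex_of_real b * exp (- s * complex_of_real \<tau>)"
      using eq w_def by (simp add: algebra_simps)
    hence "norm (w - complex_of_real a) = \<bar>b\<bar> * exp (- Re s * \<tau>)"
      by (simp add: norm_mult)
    also have "\<dots> \<le> \<bar>b\<bar>"
      using hs assms(3) by (simp add: mult_left_le)
    also have "\<dots> \<le> - a" using assms by simp
    finally have n: "norm (w - complex_of_real a) \<le> - a" .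
    have "Re (w - complex_of_real a) \<le> norm (w - complex_of_real a)" by (rule complex_Re_le_cmod)
    with n Rew show False by simp
  qed
qed

end
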